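(* Fix $k\ge1$. For $\boldsymbol{\Delta}=(\Delta_1,\dots,\Delta_k)\in\mathbb{R}^k$, let $X(\boldsymbol{\Delta})=\bigotimes_{i=1}^k L(\Delta_i)$ and $A(\boldsymbol{\Delta})=\bigotimes_{i=1}^k L(\Delta_i)$ (an ancilla of the same form), with the sum Hamiltonians. Suppose $\Delta_1,\dots,\Delta_k$ are linearly independent over $\mathbb{Q}$, and let $\tau,\tau'$ be density operators on the (fixed) Hilbert space underlying $X$ such that $\tau'=\mathrm{Tr}_A[U(\tau\otimes\eta)U^\dagger]$ for some unitary $U$ on $X\otimes A$ commuting with the total Hamiltonian for spacings $\boldsymbol{\Delta}$ and some state $\eta$ on $A$ commuting with $H_A(\boldsymbol{\Delta})$. Then for every $\boldsymbol{\Delta}'\in\mathbb{R}^k$, the same density operators satisfy $\tau'=\mathrm{Tr}_A[U'(\tau\otimes\eta')U'^\dagger]$ for some unitary $U'$ commuting with the total Hamiltonian for spacings $\boldsymbol{\Delta}'$ and some state $\eta'$ commuting with $H_A(\boldsymbol{\Delta}')$; i.e., the transformation $\tau\mapsto\tau'$ is also achievable by a covariant operation on $X(\boldsymbol{\Delta}')$.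
   Context: A ladder system $L(\Delta)$ with energy interval $\Delta\in\mathbb{R}$ is the Hilbert space with orthonormal basis $\{|n,a\rangle:n\in\mathbb{Z},a\in\mathbb{N}\}$ and Hamiltonian $H|n,a\rangle=n\Delta|n,a\rangle$ (the label $a$ indexes degeneracy). Changing $\boldsymbol{\Delta}$ changes only the Hamiltonian, not the Hilbert space, so a density operator can be regarded as a state on $X(\boldsymbol{\Delta})$ for every $\boldsymbol{\Delta}$. A set of reals is linearly independent over $\mathbb{Q}$ if no element is a rational linear combination of the others. *)

theory Defs
  imports "HOL-Analysis.Analysis"
begin

text \<open>Operators on l2 of a countable index set are represented by their matrices
  with respect to the standard orthonormal basis: M i j = <e_i, M e_j>.\<close>

text \<open>Basis labels of X = tensor of k ladders L(Delta_i): |n,a> with n : 'k => int, a : 'k => nat.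
  The same label type is used for the ancilla A.\<close>
type_synonym 'k idx = "('k \<Rightarrow> int) \<times> ('k \<Rightarrow> nat)"

text \<open>Eigenvalue of the sum Hamiltonian H(Delta) on the basis vector |n,a>.\<close>
definition energy :: "('k::finite \<Rightarrow> real) \<Rightarrow> 'k idx \<Rightarrow> real" where
  "energy \<Delta> x = (\<Sum>i\<in>UNIV. real_of_int (fst x i) * \<Delta> i)"

definition tot_energy :: "('k::finite \<Rightarrow> real) \<Rightarrow> 'k idx \<times> 'k idx \<Rightarrow> real" where
  "tot_energy \<Delta> p = energy \<Delta> (fst p) + energy \<Delta> (snd p)"

definition rat_lin_indep :: "('k::finite \<Rightarrow> real) \<Rightarrow> bool" where
  "rat_lin_indep \<Delta> \<longleftrightarrow>
     (\<forall>q :: 'k \<Rightarrow> rat. (\<Sum>i\<in>UNIV. of_rat (q i) * \<Delta> i) = 0 \<longrightarrow> (\<forall>i. q i = 0))"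

text \<open>Density operator: positive semidefinite (every finite section) with trace 1
  (absolutely convergent diagonal sum).  This determines a positive trace-class operator.\<close>
definition density_op :: "('a \<Rightarrow> 'a \<Rightarrow> complex) \<Rightarrow> bool" where
  "density_op \<rho> \<longleftrightarrow>
     (\<forall>F (v :: 'a \<Rightarrow> complex). finite F \<longrightarrow>
        Im (\<Sum>i\<in>F. \<Sum>j\<in>F. cnj (v i) * \<rho> i j * v j) = 0 \<and>
        Re (\<Sum>i\<in>F. \<Sum>j\<in>F. cnj (v i) * \<rho> i j * v j) \<ge> 0)
     \<and> ((\<lambda>i. \<rho> i i) has_sum 1) UNIV"

definition unitary_mat :: "('a \<Rightarrow> 'a \<Rightarrow> complex) \<Rightarrow> bool" where
  "unitary_mat U \<longleftrightarrow>
     (\<forall>j j'. ((\<lambda>i. cnj (U i j) * U i j') has_sum (if j = j' then 1 else 0)) UNIV) \<and>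
     (\<forall>i i'. ((\<lambda>j. U i j * cnj (U i' j)) has_sum (if i = i' then 1 else 0)) UNIV)"

text \<open>A bounded operator commutes with a Hamiltonian diagonal in the basis (eigenvalue E)
  iff its matrix is block diagonal w.r.t. energy: (H M)_{ij} = E i M_{ij} = M_{ij} E j = (M H)_{ij}.\<close>
definition commutes_diag :: "('a \<Rightarrow> real) \<Rightarrow> ('a \<Rightarrow> 'a \<Rightarrow> complex) \<Rightarrow> bool" where
  "commutes_diag E M \<longleftrightarrow> (\<forall>i j. complex_of_real (E i) * M i j = M i j * complex_of_real (E j))"

definition tensor_mat :: "('a \<Rightarrow> 'a \<Rightarrow> complex) \<Rightarrow> ('b \<Rightarrow> 'b \<Rightarrow> complex)
    \<Rightarrow> ('a \<times> 'b \<Rightarrow> 'a \<times> 'b \<Rightarrow> complex)" where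
  "tensor_mat \<rho> \<sigma> p q = \<rho> (fst p) (fst q) * \<sigma> (snd p) (snd q)"

text \<open>Tr_A [ U \<rho> U^dagger ]  (all sums converge absolutely for unitary U and density \<rho>).\<close>
definition channel_out :: "('a \<times> 'b \<Rightarrow> 'a \<times> 'b \<Rightarrow> complex) \<Rightarrow> ('a \<times> 'b \<Rightarrow> 'a \<times> 'b \<Rightarrow> complex)
    \<Rightarrow> ('a \<Rightarrow> 'a \<Rightarrow> complex)" where
  "channel_out U \<rho> x x' =
     (\<Sum>\<^sub>\<infinity>a. \<Sum>\<^sub>\<infinity>(j, j'). U (x, a) j * \<rho> j j' * cnj (U (x', a) j'))"

definition covariant_achievable ::
  "('k::finite \<Rightarrow> real) \<Rightarrow> ('k idx \<Rightarrow> 'k idx \<Rightarrow> complex) \<Rightarrow> ('k idx \<Rightarrow> 'k idx \<Rightarrow> complex) \<Rightarrow> bool" where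
  "covariant_achievable \<Delta> \<tau> \<tau>' \<longleftrightarrow>
     (\<exists>(U :: 'k idx \<times> 'k idx \<Rightarrow> 'k idx \<times> 'k idx \<Rightarrow> complex) (\<eta> :: 'k idx \<Rightarrow> 'k idx \<Rightarrow> complex).
        unitary_mat U \<and> commutes_diag (tot_energy \<Delta>) U \<and>
        density_op \<eta> \<and> commutes_diag (energy \<Delta>) \<eta> \<and>
        \<tau>' = channel_out U (tensor_mat \<tau> \<eta>))"

end

theory Submission
  imports Defs
begin

lemma indep_int:
  fixes \<Delta> :: "'k::finite \<Rightarrow> real"
  assumes "rat_lin_indep \<Delta>"
    and "(\<Sum>i\<in>UNIV. real_of_int (n i) * \<Delta> i) = (\<Sum>i\<in>UNIV. real_of_int (m i) * \<Delta> i)"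
  shows "n = m"
proof -
  let ?q = "\<lambda>i. (of_int (n i - m i) :: rat)"
  have "(\<Sum>i\<in>UNIV. of_rat (?q i) * \<Delta> i) = (\<Sum>i\<in>UNIV. real_of_int (n i) * \<Delta> i - real_of_int (m i) * \<Delta> i)"
    by (intro sum.cong) (auto simp: algebra_simps of_rat_diff)
  also have "\<dots> = 0" using assms(2) by (simp add: sum_subtractf)
  finally have z: "(\<Sum>i\<in>UNIV. of_rat (?q i) * \<Delta> i) = 0" .
  have "\<forall>i. ?q i = 0"
    using assms(1)[unfolded rat_lin_indep_def, rule_format, OF z] by blast
  then show ?thesis by auto
qed

lemma commutes_transfer:
  assumes "commutes_diag E M" and "\<And>i j. E i = E j \<Longrightarrow> E' i = E' j"
  shows "commutes_diag E' M"
  unfolding commutes_diag_def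
proof (intro allI)
  fix i j
  show "complex_of_real (E' i) * M i j = M i j * complex_of_real (E' j)"
  proof (cases "M i j = 0")
    case True then show ?thesis by simp
  next
    case False
    have "complex_of_real (E i) * M i j = M i j * complex_of_real (E j)"
      using assms(1) unfolding commutes_diag_def by blast
    then have "(complex_of_real (E i) - complex_of_real (E j)) * M i j = 0"
      by (simp add: algebra_simps)
    then have "complex_of_real (E i) = complex_of_real (E j)" using False by simp
    then have "E i = E j" by simp
    then have "E' i = E' j" by (rule assms(2))
    then show ?thesis by simp
  qed
qed

lemma energy_eq:
  fixes \<Delta> \<Delta>' :: "'k::finite \<Rightarrow> real"
  assumes "rat_lin_indep \<Delta>" "energy \<Delta> x = energy \<Delta> y"
  shows "energy \<Delta>' x = energy \<Delta>' y"
proof -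
  have "fst x = fst y" using indep_int[OF assms(1), of "fst x" "fst y"] assms(2)
    unfolding energy_def by simp
  then show ?thesis unfolding energy_def by simp
qed

lemma tot_energy_alt:
  "tot_energy \<Delta> p = (\<Sum>i\<in>UNIV. real_of_int (fst (fst p) i + fst (snd p) i) * \<Delta> i)"
  unfolding tot_energy_def energy_def by (simp add: sum.distrib[symmetric] algebra_simps)

lemma tot_energy_eq:
  fixes \<Delta> \<Delta>' :: "'k::finite \<Rightarrow> real"
  assumes "rat_lin_indep \<Delta>" "tot_energy \<Delta> p = tot_energy \<Delta> q"
  shows "tot_energy \<Delta>' p = tot_energy \<Delta>' q"
proof -
  have "(\<lambda>i. fst (fst p) i + fst (snd p) i) = (\<lambda>i. fst (fst q) i + fst (snd q) i)"
    using indep_int[OF assms(1), of "\<lambda>i. fst (fst p) i + fst (snd p) i" "\<lambda>i. fst (fst q) i + fst (snd q) i"]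
      assms(2) unfolding tot_energy_alt by simp
  then have h: "\<And>i. fst (fst p) i + fst (snd p) i = fst (fst q) i + fst (snd q) i"
    by (simp add: fun_eq_iff)
  show ?thesis by (simp only: tot_energy_alt h)
qed

theorem mainTheorem9:
  fixes \<Delta> \<Delta>' :: "'k::finite \<Rightarrow> real"
    and \<tau> \<tau>' :: "'k idx \<Rightarrow> 'k idx \<Rightarrow> complex"
  assumes "rat_lin_indep \<Delta>"
    and "density_op \<tau>" and "density_op \<tau>'"
    and "covariant_achievable \<Delta> \<tau> \<tau>'"
  shows "covariant_achievable \<Delta>' \<tau> \<tau>'"
proof -
  obtain U \<eta> where h: "unitary_mat U" "commutes_diag (tot_energy \<Delta>) U"
    "density_op \<eta>" "commutes_diag (energy \<Delta>) \<eta>" "\<tau>' = channel_out U (tensor_mat \<tau> \<eta>)"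
    using assms(4) unfolding covariant_achievable_def by blast
  have "commutes_diag (tot_energy \<Delta>') U"
    using commutes_transfer[OF h(2)] tot_energy_eq[OF assms(1)] by blast
  moreover have "commutes_diag (energy \<Delta>') \<eta>"
    using commutes_transfer[OF h(4)] energy_eq[OF assms(1)] by blast
  ultimately show ?thesis unfolding covariant_achievable_def using h by blast
qed

end
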